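(* Let $\epsilon>0$ and $\alpha>0$ be constants. There exists a constant $\delta>0$ such that, for all sufficiently large $n$, if $V\subseteq\mathbb{Z}_2^{2n}$ is a uniformly random subspace of dimension $m\ge\alpha n$, then $\Pr[\dim(\mathrm{rad}(V))\ge\epsilon n]\le2^{-\delta n^2}$.
   Context: Symplectic inner product on $\mathbb{Z}_2^{2n}$: $(\mathbf a,\mathbf b)\odot(\mathbf a',\mathbf b')=\mathbf a\cdot\mathbf b'+\mathbf a'\cdot\mathbf b\pmod2$. For a subspace $V$, $V^\perp=\{\mathbf v:\mathbf v\odot\mathbf w=0\ \forall\mathbf w\in V\}$, and the radical is $\mathrm{rad}(V):=V\cap V^\perp$. *)

theory Defs
  imports Complex_Main "HOL.Vector_Spaces" "HOL-Library.Z2" "HOL-Library.Function_Algebras"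
begin

text \<open>Vectors of Z_2^{2n} are modelled as functions nat => bit vanishing outside {..<2n};
  coordinates 0..n-1 form the a-part, coordinates n..2n-1 the b-part.\<close>

definition scaleZ2 :: "bit \<Rightarrow> (nat \<Rightarrow> bit) \<Rightarrow> (nat \<Rightarrow> bit)" where
  "scaleZ2 c v = (\<lambda>i. c * v i)"

definition ambient :: "nat \<Rightarrow> (nat \<Rightarrow> bit) set" where
  "ambient n = {v. \<forall>i\<ge>2*n. v i = 0}"

definition symp :: "nat \<Rightarrow> (nat \<Rightarrow> bit) \<Rightarrow> (nat \<Rightarrow> bit) \<Rightarrow> bit" where
  "symp n v w = (\<Sum>i<n. v i * w (n+i) + w i * v (n+i))"

definition sperp :: "nat \<Rightarrow> (nat \<Rightarrow> bit) set \<Rightarrow> (nat \<Rightarrow> bit) set" where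
  "sperp n V = {u \<in> ambient n. \<forall>w\<in>V. symp n u w = 0}"

definition rad :: "nat \<Rightarrow> (nat \<Rightarrow> bit) set \<Rightarrow> (nat \<Rightarrow> bit) set" where
  "rad n V = V \<inter> sperp n V"

interpretation Z2vs: vector_space scaleZ2
  by unfold_locales (auto simp: scaleZ2_def fun_eq_iff algebra_simps)

abbreviation subspZ2 :: "(nat \<Rightarrow> bit) set \<Rightarrow> bool" where
  "subspZ2 \<equiv> Z2vs.subspace"

abbreviation dimZ2 :: "(nat \<Rightarrow> bit) set \<Rightarrow> nat" where
  "dimZ2 \<equiv> Z2vs.dim"

text \<open>The set of subspaces of Z_2^{2n} of dimension m (uniform distribution on it).\<close>
definition subspaces_dim :: "nat \<Rightarrow> nat \<Rightarrow> (nat \<Rightarrow> bit) set set" where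
  "subspaces_dim n m = {V. V \<subseteq> ambient n \<and> subspZ2 V \<and> dimZ2 V = m}"

end

theory Submission
  imports Defs "HOL-Library.FuncSet"
begin

lemma bit_cases2: "(x::bit) = 0 \<or> x = 1" by (cases x) auto

lemma UNIV_bit: "(UNIV::bit set) = {0,1}" using bit_cases2 by auto
lemma card_UNIV_bit: "card (UNIV::bit set) = 2" by (simp add: UNIV_bit)

lemma fun_add_self[simp]: "(x::nat\<Rightarrow>bit) + x = 0"
  by (auto simp: fun_eq_iff)

lemma fun_minus_eq_plus: "(x::nat\<Rightarrow>bit) - y = x + y"
  by (auto simp: fun_eq_iff)

lemma scaleZ2_0[simp]: "scaleZ2 0 x = 0" and scaleZ2_1[simp]: "scaleZ2 1 x = x"
  by (auto simp: scaleZ2_def fun_eq_iff)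

lemma symp_add_left: "symp n (u+v) w = symp n u w + symp n v w"
  by (simp add: symp_def sum.distrib[symmetric] algebra_simps del: add_bit_eq_xor mult_bit_eq_and)

lemma symp_add_right: "symp n w (u+v) = symp n w u + symp n w v"
  by (simp add: symp_def sum.distrib[symmetric] algebra_simps del: add_bit_eq_xor mult_bit_eq_and)

lemma symp_comm: "symp n u w = symp n w u"
  unfolding symp_def by (rule sum.cong) (simp_all add: algebra_simps del: add_bit_eq_xor mult_bit_eq_and)

lemma symp_zero_left[simp]: "symp n 0 w = 0"
  by (simp add: symp_def)

lemma ambient_subspace: "subspZ2 (ambient n)"
  by (auto simp: Z2vs.subspace_def ambient_def scaleZ2_def)

lemma card_ambient: "card (ambient n) = 2^(2*n)"
proof -
  have "bij_betw (\<lambda>v. restrict v {..<2*n}) (ambient n) (PiE {..<2*n} (\<lambda>_. UNIV::bit set))"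
    unfolding bij_betw_def
  proof
    show "inj_on (\<lambda>v. restrict v {..<2 * n}) (ambient n)"
      by (auto simp: inj_on_def ambient_def fun_eq_iff restrict_def) (metis not_le)
    show "(\<lambda>v. restrict v {..<2 * n}) ` ambient n = {..<2 * n} \<rightarrow>\<^sub>E UNIV"
    proof (auto simp: PiE_def)
      fix f :: "nat \<Rightarrow> bit" assume f: "f \<in> extensional {..<2*n}"
      let ?g = "\<lambda>i. if i < 2*n then f i else 0"
      have "?g \<in> ambient n" by (auto simp: ambient_def)
      moreover have "restrict ?g {..<2*n} = f" using f
        by (auto simp: fun_eq_iff restrict_def extensional_def)
      ultimately show "f \<in> (\<lambda>v. restrict v {..<2 * n}) ` ambient n" by (intro image_eqI[where x="?g"]) simp_all
    qed
  qed
  hence "card (ambient n) = card (PiE {..<2*n} (\<lambda>_. UNIV::bit set))" by (rule bij_betw_same_card)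
  also have "\<dots> = 2^(2*n)" by (simp add: card_PiE card_UNIV_bit)
  finally show ?thesis .
qed

lemma finite_ambient: "finite (ambient n)"
  using card_ambient by (metis card.infinite power_not_zero zero_neq_numeral)


lemma symp_scale_left: "symp n (scaleZ2 c u) w = c * symp n u w"
  using bit_cases2[of c] by auto

lemma sperp_subspace: "subspZ2 (sperp n V)"
  unfolding Z2vs.subspace_def sperp_def
  using ambient_subspace[of n] unfolding Z2vs.subspace_def
  by (auto simp: symp_add_left symp_scale_left)

lemma rad_subspace: "subspZ2 V \<Longrightarrow> subspZ2 (rad n V)"
  unfolding rad_def by (intro Z2vs.subspace_inter sperp_subspace)

lemma rad_sub: "rad n V \<subseteq> V" by (auto simp: rad_def)

lemma nondeg:
  assumes "a \<in> ambient n" "a \<noteq> 0"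
  shows "\<exists>w\<in>ambient n. symp n w a = 1"
proof -
  obtain j where j: "a j = 1" using assms(2) by (auto simp: fun_eq_iff)
  with assms(1) have "j < 2*n" by (auto simp: ambient_def) (metis not_le zero_neq_one)
  show ?thesis
  proof (cases "j < n")
    case True
    let ?w = "\<lambda>i. if i = n + j then 1 else (0::bit)"
    have "?w \<in> ambient n" using True by (auto simp: ambient_def)
    moreover have "symp n ?w a = (\<Sum>i<n. if i = j then a i else 0)"
      unfolding symp_def by (rule sum.cong) auto
    ultimately show ?thesis using True j by auto
  next
    case False
    let ?w = "\<lambda>i. if i = j - n then 1 else (0::bit)"
    have "?w \<in> ambient n" using False \<open>j<2*n\<close> by (auto simp: ambient_def)
    moreover have "symp n ?w a = (\<Sum>i<n. if i = j - n then a j else 0)"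
      unfolding symp_def by (rule sum.cong) (use False \<open>j<2*n\<close> in auto)
    moreover have "j - n < n" using False \<open>j<2*n\<close> by simp
    ultimately show ?thesis using j by auto
  qed
qed

lemma span_ambient: "B \<subseteq> ambient n \<Longrightarrow> Z2vs.span B \<subseteq> ambient n"
  by (rule Z2vs.span_minimal[OF _ ambient_subspace])

lemma exists_dual:
  assumes "finite B" "Z2vs.independent B" "B \<subseteq> ambient n" "a \<in> ambient n" "a \<notin> Z2vs.span B"
  shows "\<exists>w\<in>ambient n. (\<forall>b\<in>B. symp n w b = 0) \<and> symp n w a = 1"
  using assms
proof (induction B arbitrary: a rule: finite_induct)
  case empty
  then show ?case using nondeg[of a n] Z2vs.span_empty by auto
next
  case (insert c B0)
  have iB0: "Z2vs.independent B0" and cB0: "c \<notin> Z2vs.span B0"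
    using insert(1,2,4) Z2vs.independent_insert by auto
  have aB0: "a \<notin> Z2vs.span B0" using insert(7) Z2vs.span_mono[of B0 "insert c B0"] by auto
  have acB0: "a + c \<notin> Z2vs.span B0"
  proof
    assume "a + c \<in> Z2vs.span B0"
    hence "a + c \<in> Z2vs.span (insert c B0)" using Z2vs.span_mono[of B0 "insert c B0"] by auto
    moreover have "c \<in> Z2vs.span (insert c B0)" by (simp add: Z2vs.span_base)
    ultimately have "(a + c) + c \<in> Z2vs.span (insert c B0)" by (rule Z2vs.span_add)
    moreover have "(a + c) + c = a" by (simp add: add.assoc)
    ultimately show False using insert(7) by simp
  qed
  have amb: "B0 \<subseteq> ambient n" "c \<in> ambient n" using insert(5) by auto
  have "a + c \<in> ambient n" using amb insert(6) ambient_subspace[of n]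
    unfolding Z2vs.subspace_def by auto
  obtain w1 where w1: "w1 \<in> ambient n" "\<forall>b\<in>B0. symp n w1 b = 0" "symp n w1 a = 1"
    using insert(3)[OF iB0 amb(1) insert(6) aB0] by blast
  obtain w2 where w2: "w2 \<in> ambient n" "\<forall>b\<in>B0. symp n w2 b = 0" "symp n w2 (a + c) = 1"
    using insert(3)[OF iB0 amb(1) \<open>a + c \<in> ambient n\<close> acB0] by blast
  show ?case
  proof (cases "symp n w1 c = 0")
    case True then show ?thesis using w1 by auto
  next
    case F1: False
    show ?thesis
    proof (cases "symp n w2 c = 0")
      case True then show ?thesis using w2 by (auto simp: symp_add_right)
    next
      case False
      have "w1 + w2 \<in> ambient n" using w1 w2 ambient_subspace[of n]
        unfolding Z2vs.subspace_def by auto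
      moreover have "\<forall>b\<in>insert c B0. symp n (w1 + w2) b = 0"
        using w1 w2 F1 False by (auto simp: symp_add_left)
      moreover have "symp n (w1 + w2) a = 1"
        using w1 w2 F1 False by (auto simp: symp_add_left symp_add_right)
      ultimately show ?thesis by blast
    qed
  qed
qed

definition Kp :: "nat \<Rightarrow> (nat \<Rightarrow> bit) set \<Rightarrow> (nat \<Rightarrow> bit) set" where
  "Kp n B = {x \<in> ambient n. \<forall>b\<in>B. symp n x b = 0}"

lemma card_Kp:
  assumes "finite B" "Z2vs.independent B" "B \<subseteq> ambient n"
  shows "card (Kp n B) * 2^card B \<le> 2^(2*n)"
  using assms
proof (induction B rule: finite_induct)
  case empty
  then show ?case by (simp add: Kp_def card_ambient)
next
  case (insert c B0)
  have iB0: "Z2vs.independent B0" and cB0: "c \<notin> Z2vs.span B0"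
    using insert Z2vs.independent_insert by auto
  obtain w where w: "w \<in> ambient n" "\<forall>b\<in>B0. symp n w b = 0" "symp n w c = 1"
    using exists_dual[OF insert(1) iB0 _ _ cB0, of n] insert(5) by blast
  have fin: "finite (Kp n B0)" using finite_ambient by (rule rev_finite_subset) (auto simp: Kp_def)
  have sub1: "Kp n (insert c B0) \<subseteq> Kp n B0" by (auto simp: Kp_def)
  have sub2: "(\<lambda>x. x + w) ` Kp n (insert c B0) \<subseteq> Kp n B0 - Kp n (insert c B0)"
  proof
    fix y assume "y \<in> (\<lambda>x. x + w) ` Kp n (insert c B0)"
    then obtain x where x: "x \<in> Kp n (insert c B0)" "y = x + w" by auto
    have "y \<in> ambient n" using x w(1) ambient_subspace[of n]
        unfolding Z2vs.subspace_def Kp_def by auto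
    then show "y \<in> Kp n B0 - Kp n (insert c B0)"
      using x w by (auto simp: Kp_def symp_add_left)
  qed
  have inj: "inj_on (\<lambda>x. x + w) (Kp n (insert c B0))" by (auto simp: inj_on_def)
  have "card (Kp n (insert c B0)) + card ((\<lambda>x. x + w) ` Kp n (insert c B0)) \<le> card (Kp n B0)"
  proof -
    have "card (Kp n (insert c B0) \<union> (\<lambda>x. x + w) ` Kp n (insert c B0)) \<le> card (Kp n B0)"
      using sub1 sub2 fin by (intro card_mono) auto
    moreover have "card (Kp n (insert c B0) \<union> (\<lambda>x. x + w) ` Kp n (insert c B0))
       = card (Kp n (insert c B0)) + card ((\<lambda>x. x + w) ` Kp n (insert c B0))"
      using sub1 sub2 fin by (intro card_Un_disjoint) (auto intro: rev_finite_subset)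
    ultimately show ?thesis by simp
  qed
  hence "2 * card (Kp n (insert c B0)) \<le> card (Kp n B0)" using card_image[OF inj] by simp
  hence "card (Kp n (insert c B0)) * 2 ^ card (insert c B0) \<le> card (Kp n B0) * 2^card B0"
    using insert(1,2) by simp
  also have "\<dots> \<le> 2^(2*n)" using insert iB0 by auto
  finally show ?case .
qed


lemma card_span:
  assumes "finite B" "Z2vs.independent B" "B \<subseteq> ambient n"
  shows "card (Z2vs.span B) = 2^card B \<and> finite (Z2vs.span B)"
  using assms
proof (induction B rule: finite_induct)
  case empty
  then show ?case by (simp add: Z2vs.span_empty)
next
  case (insert c B0)
  have iB0: "Z2vs.independent B0" and cB0: "c \<notin> Z2vs.span B0"
    using insert Z2vs.independent_insert by auto
  have IH: "card (Z2vs.span B0) = 2^card B0" "finite (Z2vs.span B0)" using insert iB0 by auto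
  have eq: "Z2vs.span (insert c B0) = Z2vs.span B0 \<union> (\<lambda>x. x + c) ` Z2vs.span B0"
  proof
    show "Z2vs.span (insert c B0) \<subseteq> Z2vs.span B0 \<union> (\<lambda>x. x + c) ` Z2vs.span B0"
    proof
      fix x assume "x \<in> Z2vs.span (insert c B0)"
      then obtain k where k: "x - scaleZ2 k c \<in> Z2vs.span B0" unfolding Z2vs.span_insert by auto
      show "x \<in> Z2vs.span B0 \<union> (\<lambda>x. x + c) ` Z2vs.span B0"
      proof (cases "k = 0")
        case True then show ?thesis using k by simp
      next
        case False then have "k = 1" by simp
        then have "x + c \<in> Z2vs.span B0" using k by (simp add: fun_minus_eq_plus)
        moreover have "x = (x + c) + c" by (simp add: add.assoc)
        ultimately show ?thesis by blast
      qed
    qed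
    show "Z2vs.span B0 \<union> (\<lambda>x. x + c) ` Z2vs.span B0 \<subseteq> Z2vs.span (insert c B0)"
      using Z2vs.span_mono[of B0 "insert c B0"] Z2vs.span_base[of c "insert c B0"]
      by (auto intro: Z2vs.span_add)
  qed
  have disj: "Z2vs.span B0 \<inter> (\<lambda>x. x + c) ` Z2vs.span B0 = {}"
  proof (rule ccontr)
    assume "Z2vs.span B0 \<inter> (\<lambda>x. x + c) ` Z2vs.span B0 \<noteq> {}"
    then obtain y where y: "y \<in> Z2vs.span B0" "y + c \<in> Z2vs.span B0" by blast
    then have "y + (y + c) \<in> Z2vs.span B0" by (rule Z2vs.span_add)
    moreover have "y + (y + c) = c" by (simp add: add.assoc[symmetric])
    ultimately show False using cB0 by simp
  qed
  have inj: "inj_on (\<lambda>x. x + c) (Z2vs.span B0)" by (auto simp: inj_on_def)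
  have "card (Z2vs.span (insert c B0)) = card (Z2vs.span B0) + card ((\<lambda>x. x + c) ` Z2vs.span B0)"
    unfolding eq using IH disj by (intro card_Un_disjoint) auto
  also have "\<dots> = 2 ^ card (insert c B0)" using card_image[OF inj] IH insert(1,2) by simp
  finally show ?case using eq IH by simp
qed

lemma card_subspace:
  assumes "subspZ2 W" "W \<subseteq> ambient n"
  shows "card W = 2^dimZ2 W" "finite W"
proof -
  obtain B where B: "B \<subseteq> W" "Z2vs.independent B" "W \<subseteq> Z2vs.span B" "card B = dimZ2 W"
    using Z2vs.basis_exists by blast
  have fB: "finite B" using B(1) assms(2) finite_ambient by (meson finite_subset)
  have "Z2vs.span B = W" using B assms(1) by (intro Z2vs.span_subspace) auto
  then show "card W = 2^dimZ2 W" "finite W" using card_span[OF fB B(2), of n] B assms(2) by auto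
qed

lemma dim_le_2n: assumes "subspZ2 W" "W \<subseteq> ambient n" shows "dimZ2 W \<le> 2*n"
proof -
  have "card W \<le> card (ambient n)" using assms finite_ambient by (intro card_mono)
  then have "(2::nat)^dimZ2 W \<le> 2^(2*n)" using card_subspace[OF assms] card_ambient by simp
  then show ?thesis by simp
qed


definition seqs :: "('a list \<Rightarrow> 'a set) \<Rightarrow> nat \<Rightarrow> 'a list set" where
  "seqs A t = {xs. length xs = t \<and> (\<forall>i<t. xs!i \<in> A (take i xs))}"

lemma seqs_0[simp]: "seqs A 0 = {[]}"
  by (auto simp: seqs_def)

lemma seqs_Suc: "seqs A (Suc t) = (\<lambda>(ys,x). ys @ [x]) ` (SIGMA ys:seqs A t. A ys)"
proof
  show "seqs A (Suc t) \<subseteq> (\<lambda>(ys,x). ys @ [x]) ` (SIGMA ys:seqs A t. A ys)"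
  proof
    fix xs assume xs: "xs \<in> seqs A (Suc t)"
    then have len: "length xs = Suc t" by (simp add: seqs_def)
    have eq: "xs = take t xs @ [xs!t]" using len
      using take_Suc_conv_app_nth[of t xs] by simp
    have "take t xs \<in> seqs A t" using xs len by (auto simp: seqs_def)
    moreover have "xs!t \<in> A (take t xs)" using xs by (simp add: seqs_def)
    ultimately show "xs \<in> (\<lambda>(ys,x). ys @ [x]) ` (SIGMA ys:seqs A t. A ys)"
      using eq by (intro image_eqI[where x="(take t xs, xs!t)"]) auto
  qed
  show "(\<lambda>(ys,x). ys @ [x]) ` (SIGMA ys:seqs A t. A ys) \<subseteq> seqs A (Suc t)"
  proof clarify
    fix ys x assume ys: "ys \<in> seqs A t" and x: "x \<in> A ys"
    show "ys @ [x] \<in> seqs A (Suc t)"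
      unfolding seqs_def
    proof (intro CollectI conjI allI impI)
      show "length (ys @ [x]) = Suc t" using ys by (simp add: seqs_def)
      fix i assume "i < Suc t"
      then consider "i < t" | "i = t" by linarith
      then show "(ys @ [x]) ! i \<in> A (take i (ys @ [x]))"
      proof cases
        case 1 then show ?thesis using ys by (auto simp: seqs_def nth_append)
      next
        case 2 then show ?thesis using ys x by (auto simp: seqs_def nth_append)
      qed
    qed
  qed
qed

lemma seqs_take: "xs \<in> seqs A t \<Longrightarrow> j \<le> t \<Longrightarrow> take j xs \<in> seqs A j"
  by (auto simp: seqs_def min_def)

lemma card_seqs_Suc:
  assumes "finite (seqs A t)" "\<And>ys. ys \<in> seqs A t \<Longrightarrow> finite (A ys)"
  shows "card (seqs A (Suc t)) = (\<Sum>ys\<in>seqs A t. card (A ys))" "finite (seqs A (Suc t))"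
proof -
  have inj: "inj_on (\<lambda>(ys,x). ys @ [x]) (SIGMA ys:seqs A t. A ys)"
    by (auto simp: inj_on_def)
  show "card (seqs A (Suc t)) = (\<Sum>ys\<in>seqs A t. card (A ys))"
    unfolding seqs_Suc card_image[OF inj] using assms by (intro card_SigmaI) auto
  show "finite (seqs A (Suc t))" unfolding seqs_Suc using assms by auto
qed

lemma seqs_card_ge:
  assumes "\<And>i ys. i < t \<Longrightarrow> ys \<in> seqs A i \<Longrightarrow> finite (A ys) \<and> c i \<le> card (A ys)"
  shows "finite (seqs A t) \<and> (\<Prod>i<t. c i) \<le> card (seqs A t)"
  using assms
proof (induction t)
  case 0 then show ?case by simp
next
  case (Suc t)
  have IH0: "finite (seqs A t) \<and> (\<Prod>i<t. c i) \<le> card (seqs A t)" by (rule Suc.IH) (meson Suc.prems less_SucI)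
  then have IH: "finite (seqs A t)" "(\<Prod>i<t. c i) \<le> card (seqs A t)" by auto
  have f: "\<And>ys. ys \<in> seqs A t \<Longrightarrow> finite (A ys)" using Suc.prems by blast
  have "(\<Prod>i<Suc t. c i) = (\<Prod>i<t. c i) * c t" by simp
  also have "\<dots> \<le> card (seqs A t) * c t" using IH by simp
  also have "\<dots> = (\<Sum>ys\<in>seqs A t. c t)" by simp
  also have "\<dots> \<le> (\<Sum>ys\<in>seqs A t. card (A ys))" using Suc.prems by (intro sum_mono) auto
  also have "\<dots> = card (seqs A (Suc t))" using card_seqs_Suc[OF IH(1) f] by simp
  finally show ?case using card_seqs_Suc[OF IH(1) f] by simp
qed

lemma seqs_card_le:
  assumes "\<And>i ys. i < t \<Longrightarrow> ys \<in> seqs A i \<Longrightarrow> finite (A ys) \<and> card (A ys) \<le> c i"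
  shows "finite (seqs A t) \<and> card (seqs A t) \<le> (\<Prod>i<t. c i)"
  using assms
proof (induction t)
  case 0 then show ?case by simp
next
  case (Suc t)
  have IH0: "finite (seqs A t) \<and> card (seqs A t) \<le> (\<Prod>i<t. c i)" by (rule Suc.IH) (meson Suc.prems less_SucI)
  then have IH: "finite (seqs A t)" "card (seqs A t) \<le> (\<Prod>i<t. c i)" by auto
  have f: "\<And>ys. ys \<in> seqs A t \<Longrightarrow> finite (A ys)" using Suc.prems by blast
  have "card (seqs A (Suc t)) = (\<Sum>ys\<in>seqs A t. card (A ys))" using card_seqs_Suc[OF IH(1) f] by simp
  also have "\<dots> \<le> (\<Sum>ys\<in>seqs A t. c t)" using Suc.prems by (intro sum_mono) auto
  also have "\<dots> = card (seqs A t) * c t" by simp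
  also have "\<dots> \<le> (\<Prod>i<t. c i) * c t" using IH by simp
  also have "\<dots> = (\<Prod>i<Suc t. c i)" by simp
  finally show ?case using card_seqs_Suc[OF IH(1) f] by simp
qed

definition sindep :: "(nat \<Rightarrow> bit) list \<Rightarrow> bool" where
  "sindep xs = (\<forall>i<length xs. xs!i \<notin> Z2vs.span (set (take i xs)))"

lemma sindep_snoc: "sindep (xs @ [x]) \<longleftrightarrow> sindep xs \<and> x \<notin> Z2vs.span (set xs)"
proof -
  have "sindep (xs @ [x]) \<longleftrightarrow> (\<forall>i<Suc (length xs). (xs @ [x])!i \<notin> Z2vs.span (set (take i (xs @ [x]))))"
    by (simp add: sindep_def)
  also have "\<dots> \<longleftrightarrow> (\<forall>i<length xs. (xs @ [x])!i \<notin> Z2vs.span (set (take i (xs @ [x])))) \<and>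
      (xs @ [x])!(length xs) \<notin> Z2vs.span (set (take (length xs) (xs @ [x])))"
    by (auto simp: less_Suc_eq)
  also have "\<dots> \<longleftrightarrow> sindep xs \<and> x \<notin> Z2vs.span (set xs)"
    by (simp add: sindep_def nth_append)
  finally show ?thesis .
qed

lemma sindep_indep: "sindep xs \<Longrightarrow> Z2vs.independent (set xs) \<and> distinct xs"
proof (induction xs rule: rev_induct)
  case Nil then show ?case by (simp add: Z2vs.independent_empty)
next
  case (snoc x xs)
  then have "sindep xs" "x \<notin> Z2vs.span (set xs)" by (auto simp: sindep_snoc)
  moreover have "x \<notin> set xs" using calculation(2) Z2vs.span_base by auto
  ultimately show ?case using snoc.IH Z2vs.independent_insert[of x "set xs"] by auto
qed

lemma seqs_sindep:
  assumes "xs \<in> seqs A t" "\<And>ys. length ys < t \<Longrightarrow> A ys \<inter> Z2vs.span (set ys) = {}"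
  shows "sindep xs"
  unfolding sindep_def
proof (intro allI impI)
  fix i assume i: "i < length xs"
  have len: "length xs = t" using assms(1) by (simp add: seqs_def)
  have "xs!i \<in> A (take i xs)" using assms(1) i len by (simp add: seqs_def)
  moreover have "A (take i xs) \<inter> Z2vs.span (set (take i xs)) = {}"
    using assms(2)[of "take i xs"] i len by simp
  ultimately show "xs ! i \<notin> Z2vs.span (set (take i xs))" by blast
qed


lemma seqs_set: "xs \<in> seqs A t \<Longrightarrow> (\<And>ys. A ys \<subseteq> C) \<Longrightarrow> set xs \<subseteq> C"
proof
  fix x assume "xs \<in> seqs A t" "\<And>ys. A ys \<subseteq> C" "x \<in> set xs"
  then obtain i where "i < length xs" "x = xs!i" "length xs = t" "\<forall>i<t. xs ! i \<in> A (take i xs)"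
    by (auto simp: seqs_def in_set_conv_nth)
  then show "x \<in> C" using \<open>\<And>ys. A ys \<subseteq> C\<close> by blast
qed

lemma seqs_len: "xs \<in> seqs A t \<Longrightarrow> length xs = t"
  by (simp add: seqs_def)

lemma sindep_span:
  assumes "sindep ys" "set ys \<subseteq> ambient n"
  shows "card (Z2vs.span (set ys)) = 2^length ys" "finite (Z2vs.span (set ys))"
    "Z2vs.span (set ys) \<subseteq> ambient n"
proof -
  have "Z2vs.independent (set ys)" "distinct ys" using sindep_indep[OF assms(1)] by auto
  then show "card (Z2vs.span (set ys)) = 2^length ys" "finite (Z2vs.span (set ys))"
    using card_span[of "set ys" n] assms(2) distinct_card by auto
  show "Z2vs.span (set ys) \<subseteq> ambient n" using span_ambient[OF assms(2)] .
qed

lemma card_S_lower: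
  assumes "m \<le> 2*n"
  shows "2^(m*(2*n-1)) \<le> card (subspaces_dim n m) * 2^(m*m)"
proof -
  define A where "A = (\<lambda>ys. ambient n - Z2vs.span (set ys))"
  define U where "U = seqs A m"
  have Asub: "\<And>ys. A ys \<subseteq> ambient n" by (auto simp: A_def)
  have Adisj: "\<And>ys. A ys \<inter> Z2vs.span (set ys) = {}" by (auto simp: A_def)
  have "finite U \<and> (\<Prod>i<m. (2::nat)^(2*n-1)) \<le> card U"
    unfolding U_def
  proof (rule seqs_card_ge)
    fix i ys assume i: "i < m" and ys: "ys \<in> seqs A i"
    have si: "sindep ys" using ys Adisj by (intro seqs_sindep) auto
    have ss: "set ys \<subseteq> ambient n" using seqs_set[OF ys Asub] .
    note sp = sindep_span[OF si ss]
    have "card (A ys) = card (ambient n) - card (Z2vs.span (set ys))"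
      unfolding A_def using sp finite_ambient by (intro card_Diff_subset) auto
    also have "\<dots> = 2^(2*n) - 2^i" using sp card_ambient seqs_len[OF ys] by simp
    also have "\<dots> \<ge> 2^(2*n-1)"
    proof -
      have "(2::nat)^i \<le> 2^(2*n-1)" using i assms by (intro power_increasing) auto
      moreover have "(2::nat)^(2*n) = 2 * 2^(2*n-1)" using i assms
        by (metis Suc_diff_1 gr0I less_le_trans mult_eq_0_iff not_less_zero power_Suc zero_less_numeral)
      ultimately show ?thesis by linarith
    qed
    finally show "finite (A ys) \<and> 2^(2*n-1) \<le> card (A ys)"
      using finite_ambient Asub by (auto intro: rev_finite_subset)
  qed
  then have U1: "2^(m*(2*n-1)) \<le> card U" by (simp add: power_mult[symmetric] mult.commute)
  have finS: "finite (subspaces_dim n m)"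
    using finite_ambient by (rule rev_finite_subset[OF finite_Pow_iff[THEN iffD2]]) (auto simp: subspaces_dim_def)
  have "U \<subseteq> (\<Union>V\<in>subspaces_dim n m. {xs. set xs \<subseteq> V \<and> length xs = m})"
  proof
    fix xs assume xs: "xs \<in> U"
    have si: "sindep xs" using xs Adisj unfolding U_def by (intro seqs_sindep) auto
    have ss: "set xs \<subseteq> ambient n" using seqs_set[of xs A m "ambient n"] Asub xs unfolding U_def by blast
    have len: "length xs = m" using xs seqs_len unfolding U_def by blast
    have "Z2vs.span (set xs) \<in> subspaces_dim n m"
      unfolding subspaces_dim_def
      using sindep_span[OF si ss] sindep_indep[OF si] len distinct_card
        Z2vs.dim_span_eq_card_independent[of "set xs"] by auto
    moreover have "set xs \<subseteq> Z2vs.span (set xs)" by (rule Z2vs.span_superset)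
    ultimately show "xs \<in> (\<Union>V\<in>subspaces_dim n m. {xs. set xs \<subseteq> V \<and> length xs = m})"
      using len by blast
  qed
  then have "card U \<le> card (\<Union>V\<in>subspaces_dim n m. {xs. set xs \<subseteq> V \<and> length xs = m})"
    using finS finite_ambient
    by (intro card_mono finite_UN_I) (auto simp: subspaces_dim_def intro!: finite_lists_length_eq
        intro: rev_finite_subset[OF finite_ambient])
  also have "\<dots> \<le> (\<Sum>V\<in>subspaces_dim n m. card {xs. set xs \<subseteq> V \<and> length xs = m})"
    using finS by (rule card_UN_le)
  also have "\<dots> = (\<Sum>V\<in>subspaces_dim n m. 2^(m*m))"
  proof (rule sum.cong)
    fix V assume V: "V \<in> subspaces_dim n m"
    then have "card V = 2^m" "finite V" using card_subspace[of V n] by (auto simp: subspaces_dim_def)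
    then show "card {xs. set xs \<subseteq> V \<and> length xs = m} = 2^(m*m)"
      by (simp add: card_lists_length_eq power_mult)
  qed simp
  finally show ?thesis using U1 by simp
qed


lemma seqs_set2: "xs \<in> seqs A t \<Longrightarrow> (\<And>ys. length ys < t \<Longrightarrow> A ys \<subseteq> C) \<Longrightarrow> set xs \<subseteq> C"
proof
  fix x assume a: "xs \<in> seqs A t" "\<And>ys. length ys < t \<Longrightarrow> A ys \<subseteq> C" "x \<in> set xs"
  then obtain i where i: "i < length xs" "x = xs!i" "length xs = t" "\<forall>i<t. xs ! i \<in> A (take i xs)"
    by (auto simp: seqs_def in_set_conv_nth)
  then have "A (take i xs) \<subseteq> C" using a(2)[of "take i xs"] by simp
  then show "x \<in> C" using i by blast
qed

lemma finite_S: "finite (subspaces_dim n m)"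
  using finite_ambient by (rule rev_finite_subset[OF finite_Pow_iff[THEN iffD2]]) (auto simp: subspaces_dim_def)

lemma nat_pow_div: "(c::nat) * 2^p \<le> 2^q \<Longrightarrow> c \<le> 2^(q-p)"
proof (cases "p \<le> q")
  case True
  assume a: "c * 2^p \<le> 2^q"
  have "(2::nat)^q = 2^(q-p) * 2^p" using True by (simp add: power_add[symmetric])
  then show ?thesis using a by simp
next
  case False
  assume a: "c * 2^p \<le> 2^q"
  have "(2::nat)^q < 2^p" using False by simp
  then have "c = 0"
  proof (rule contrapos_pp)
    assume "c \<noteq> 0"
    then have "(2::nat)^p \<le> c * 2^p" by simp
    then show "\<not> (2::nat)^q < 2^p" using a by linarith
  qed
  then show ?thesis by simp
qed

definition AT :: "nat \<Rightarrow> nat \<Rightarrow> (nat \<Rightarrow> bit) list \<Rightarrow> (nat \<Rightarrow> bit) set" where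
  "AT n k ys = {x \<in> ambient n. (\<forall>a\<in>set (take k ys). symp n x a = 0) \<and>
       (length ys < k \<longrightarrow> x \<notin> Z2vs.span (set ys))}"

lemma card_T_upper:
  "finite (seqs (AT n k) m) \<and> card (seqs (AT n k) m) \<le> (\<Prod>i<m. 2^(2*n - min i k))"
proof (rule seqs_card_le)
  fix i ys assume i: "i < m" and ys: "ys \<in> seqs (AT n k) i"
  have len: "length ys = i" using seqs_len[OF ys] .
  have "take (min i k) ys = take k ys" using len by (simp add: min_def)
  then have zs: "take k ys \<in> seqs (AT n k) (min i k)" using seqs_take[OF ys, of "min i k"] by simp
  have si: "sindep (take k ys)"
    using zs by (rule seqs_sindep) (auto simp: AT_def)
  have ss: "set (take k ys) \<subseteq> ambient n" using seqs_set[OF zs, of "ambient n"] by (auto simp: AT_def)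
  have ind: "Z2vs.independent (set (take k ys))" "distinct (take k ys)" using sindep_indep[OF si] by auto
  have cz: "card (set (take k ys)) = min i k" using distinct_card[OF ind(2)] len by simp
  have "card (Kp n (set (take k ys))) * 2^(min i k) \<le> 2^(2*n)"
    using card_Kp[OF _ ind(1) ss] cz by simp
  then have ck: "card (Kp n (set (take k ys))) \<le> 2^(2*n - min i k)" by (rule nat_pow_div)
  have sub: "AT n k ys \<subseteq> Kp n (set (take k ys))" by (auto simp: AT_def Kp_def)
  have fK: "finite (Kp n (set (take k ys)))"
    using finite_ambient by (rule rev_finite_subset) (auto simp: Kp_def)
  show "finite (AT n k ys) \<and> card (AT n k ys) \<le> 2^(2*n - min i k)"
    using sub fK ck card_mono[OF fK sub] by (auto intro: rev_finite_subset)
qed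

definition GA :: "nat \<Rightarrow> nat \<Rightarrow> (nat \<Rightarrow> bit) set \<Rightarrow> (nat \<Rightarrow> bit) list \<Rightarrow> (nat \<Rightarrow> bit) set" where
  "GA n k V ys = (if length ys < k then rad n V else V) - Z2vs.span (set ys)"

lemma GA_sindep: "xs \<in> seqs (GA n k V) t \<Longrightarrow> sindep xs"
  by (rule seqs_sindep) (auto simp: GA_def)

lemma GA_set: "xs \<in> seqs (GA n k V) t \<Longrightarrow> set xs \<subseteq> V"
proof -
  assume xs: "xs \<in> seqs (GA n k V) t"
  have "\<And>ys. GA n k V ys \<subseteq> V" using rad_sub[of n V] by (auto simp: GA_def)
  then show ?thesis by (rule seqs_set[OF xs])
qed

lemma GA_set_rad: assumes "xs \<in> seqs (GA n k V) t" shows "set (take k xs) \<subseteq> rad n V"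
proof -
  have "take (min k t) xs = take k xs" using seqs_len[OF assms] by (simp add: min_def)
  then have zs: "take k xs \<in> seqs (GA n k V) (min k t)" using seqs_take[OF assms, of "min k t"] by simp
  show ?thesis using seqs_set2[OF zs] by (auto simp: GA_def)
qed

lemma card_G_lower:
  assumes V: "V \<in> subspaces_dim n m" and kr: "k \<le> dimZ2 (rad n V)" and km: "k \<le> m"
  shows "finite (seqs (GA n k V) m) \<and>
    (\<Prod>i<m. if i < k then 2^(k-1) else 2^(m-1)) \<le> card (seqs (GA n k V) m)"
proof (rule seqs_card_ge)
  have Vs: "subspZ2 V" "V \<subseteq> ambient n" "dimZ2 V = m" using V by (auto simp: subspaces_dim_def)
  have Rs: "subspZ2 (rad n V)" "rad n V \<subseteq> ambient n" using rad_subspace[OF Vs(1)] rad_sub[of n V] Vs(2) by auto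
  fix i ys assume i: "i < m" and ys: "ys \<in> seqs (GA n k V) i"
  have len: "length ys = i" using seqs_len[OF ys] .
  have si: "sindep ys" using GA_sindep[OF ys] .
  have sV: "set ys \<subseteq> V" using GA_set[OF ys] .
  note sp = sindep_span[OF si order.trans[OF sV Vs(2)]]
  show "finite (GA n k V ys) \<and> (if i < k then 2^(k-1) else 2^(m-1)) \<le> card (GA n k V ys)"
  proof (cases "i < k")
    case True
    have "set ys \<subseteq> rad n V" using GA_set_rad[OF ys] True len by simp
    then have spR: "Z2vs.span (set ys) \<subseteq> rad n V" using Rs(1) by (rule Z2vs.span_minimal)
    have GAe: "GA n k V ys = rad n V - Z2vs.span (set ys)" using True len by (simp add: GA_def)
    have fR: "finite (rad n V)" using card_subspace[OF Rs] by simp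
    have "card (GA n k V ys) = card (rad n V) - card (Z2vs.span (set ys))"
      unfolding GAe using spR fR by (intro card_Diff_subset) (auto intro: rev_finite_subset)
    also have "\<dots> = 2^dimZ2 (rad n V) - 2^i" using card_subspace[OF Rs] sp len by simp
    also have "\<dots> \<ge> 2^(k-1)"
    proof -
      have "(2::nat)^i \<le> 2^(k-1)" using True by (intro power_increasing) auto
      moreover have "(2::nat)^k \<le> 2^dimZ2 (rad n V)" using kr by (intro power_increasing) auto
      moreover have "(2::nat)^k = 2 * 2^(k-1)" using True
        by (metis Suc_diff_1 gr0I not_less_zero power_Suc)
      ultimately show ?thesis by linarith
    qed
    finally show ?thesis using True GAe fR by auto
  next
    case False
    have spV: "Z2vs.span (set ys) \<subseteq> V" using sV Vs(1) by (rule Z2vs.span_minimal)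
    have GAe: "GA n k V ys = V - Z2vs.span (set ys)" using False len by (simp add: GA_def)
    have fV: "finite V" using card_subspace[OF Vs(1,2)] by simp
    have "card (GA n k V ys) = card V - card (Z2vs.span (set ys))"
      unfolding GAe using spV fV by (intro card_Diff_subset) (auto intro: rev_finite_subset)
    also have "\<dots> = 2^m - 2^i" using card_subspace[OF Vs(1,2)] Vs(3) sp len by simp
    also have "\<dots> \<ge> 2^(m-1)"
    proof -
      have "(2::nat)^i \<le> 2^(m-1)" using i by (intro power_increasing) auto
      moreover have "(2::nat)^m = 2 * 2^(m-1)" using i
        by (metis Suc_diff_1 gr0I not_less_zero power_Suc)
      ultimately show ?thesis by linarith
    qed
    finally show ?thesis using False GAe fV by auto
  qed
qed

lemma G_span:
  assumes V: "V \<in> subspaces_dim n m" and xs: "xs \<in> seqs (GA n k V) m"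
  shows "Z2vs.span (set xs) = V"
proof -
  have Vs: "subspZ2 V" "V \<subseteq> ambient n" "dimZ2 V = m" using V by (auto simp: subspaces_dim_def)
  have si: "sindep xs" using GA_sindep[OF xs] .
  have sV: "set xs \<subseteq> V" using GA_set[OF xs] .
  note sp = sindep_span[OF si order.trans[OF sV Vs(2)]]
  have spV: "Z2vs.span (set xs) \<subseteq> V" using sV Vs(1) by (rule Z2vs.span_minimal)
  have fV: "finite V" "card V = 2^m" using card_subspace[OF Vs(1,2)] Vs(3) by auto
  show ?thesis using card_subset_eq[OF fV(1) spV] sp seqs_len[OF xs] fV by simp
qed

lemma G_sub_T:
  assumes V: "V \<in> subspaces_dim n m" and xs: "xs \<in> seqs (GA n k V) m"
  shows "xs \<in> seqs (AT n k) m"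
  unfolding seqs_def
proof (intro CollectI conjI allI impI)
  have Vs: "subspZ2 V" "V \<subseteq> ambient n" "dimZ2 V = m" using V by (auto simp: subspaces_dim_def)
  show len: "length xs = m" using seqs_len[OF xs] .
  fix i assume i: "i < m"
  have x: "xs!i \<in> GA n k V (take i xs)" using xs i by (simp add: seqs_def)
  have xV: "xs!i \<in> V" using GA_set[OF xs] i len by auto
  have R: "set (take k xs) \<subseteq> rad n V" using GA_set_rad[OF xs] .
  have "set (take k (take i xs)) \<subseteq> set (take k xs)"
    by (simp add: min_def set_take_subset_set_take)
  then have "\<forall>a\<in>set (take k (take i xs)). symp n (xs!i) a = 0"
    using R xV by (auto simp: rad_def sperp_def symp_comm)
  moreover have "xs!i \<in> ambient n" using xV Vs(2) by auto
  moreover have "length (take i xs) < k \<longrightarrow> xs!i \<notin> Z2vs.span (set (take i xs))"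
    using x by (auto simp: GA_def)
  ultimately show "xs ! i \<in> AT n k (take i xs)" by (simp add: AT_def)
qed


lemma bad_count:
  assumes km: "k \<le> m" and B: "\<And>V. V \<in> Bad \<Longrightarrow> V \<in> subspaces_dim n m \<and> k \<le> dimZ2 (rad n V)"
  shows "card Bad * (\<Prod>i<m. if i < k then 2^(k-1) else 2^(m-1)) \<le> (\<Prod>i<m. 2^(2*n - min i k))"
proof -
  let ?P = "(\<Prod>i<m. if i < k then 2^(k-1) else 2^(m-1)) :: nat"
  have finB: "finite Bad" using finite_S[of n m] B by (meson rev_finite_subset subsetI)
  note T = card_T_upper[of n k m]
  have "card Bad * ?P = (\<Sum>V\<in>Bad. ?P)" by simp
  also have "\<dots> \<le> (\<Sum>V\<in>Bad. card (seqs (GA n k V) m))"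
    using card_G_lower B km by (intro sum_mono) blast
  also have "\<dots> = card (\<Union>V\<in>Bad. seqs (GA n k V) m)"
  proof (rule card_UN_disjoint[symmetric])
    show "finite Bad" by fact
    show "\<forall>V\<in>Bad. finite (seqs (GA n k V) m)" using card_G_lower B km by blast
    show "\<forall>V\<in>Bad. \<forall>W\<in>Bad. V \<noteq> W \<longrightarrow> seqs (GA n k V) m \<inter> seqs (GA n k W) m = {}"
      using G_span B by blast
  qed
  also have "\<dots> \<le> card (seqs (AT n k) m)"
    using T G_sub_T B by (intro card_mono) blast+
  also have "\<dots> \<le> (\<Prod>i<m. 2^(2*n - min i k))" using T by blast
  finally show ?thesis .
qed

lemma sum_if_lt: "(\<Sum>i<m. if i < k then (a::nat) else b) = min m k * a + (m - k) * b"
  by (induction m) (auto simp: min_def Suc_diff_le)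

lemma gsum: "2 * (\<Sum>i<Suc m. i) = Suc m * (m::nat)"
  by (induction m) auto

lemma sum_min: "k \<le> m \<Longrightarrow> 2 * (\<Sum>i<m. min i k) = k * (k - 1) + 2 * (m - k) * (k::nat)"
proof (induction m)
  case 0 then show ?case by simp
next
  case (Suc m)
  show ?case
  proof (cases "k \<le> m")
    case True
    have "2 * (\<Sum>i<Suc m. min i k) = 2*(\<Sum>i<m. min i k) + 2*k" using True by simp
    also have "\<dots> = k*(k-1) + 2*(m-k)*k + 2*k" using Suc.IH[OF True] by simp
    also have "\<dots> = k*(k-1) + 2*(Suc m - k)*k" using True by (simp add: Suc_diff_le)
    finally show ?thesis .
  next
    case False
    then have k: "k = Suc m" using Suc.prems by simp
    have "2 * (\<Sum>i<Suc m. min i k) = 2 * (\<Sum>i<Suc m. i)" using k by (intro arg_cong[where f="(*) 2"] sum.cong) auto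
    also have "\<dots> = Suc m * m" by (rule gsum)
    finally show ?thesis using k by simp
  qed
qed

theorem lemmaD6:
  fixes \<epsilon> \<alpha> :: real
  assumes "\<epsilon> > 0" and "\<alpha> > 0"
  shows "\<exists>\<delta>>0. \<exists>N. \<forall>n\<ge>N. \<forall>m::nat. real m \<ge> \<alpha> * real n \<longrightarrow>
           real (card {V \<in> subspaces_dim n m. real (dimZ2 (rad n V)) \<ge> \<epsilon> * real n})
             / real (card (subspaces_dim n m))
           \<le> 2 powr (- \<delta> * (real n)^2)"
proof -
  define \<delta> where "\<delta> = \<epsilon>^2/4"
  define N where "N = nat \<lceil>20/\<epsilon>^2\<rceil> + 1"
  have dpos: "\<delta> > 0" using assms by (simp add: \<delta>_def)
  show ?thesis
  proof (intro exI[of _ \<delta>] conjI exI[of _ N] allI impI dpos)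
    fix n m :: nat assume nN: "n \<ge> N" and "real m \<ge> \<alpha> * real n"
    let ?S = "subspaces_dim n m"
    let ?Bad = "{V \<in> ?S. real (dimZ2 (rad n V)) \<ge> \<epsilon> * real n}"
    show "real (card ?Bad) / real (card ?S) \<le> 2 powr (- \<delta> * (real n)^2)"
    proof (cases "?Bad = {}")
      case True
      have "card ?Bad = 0" unfolding True by simp
      then show ?thesis by simp
    next
      case False
      then obtain V0 where V0: "V0 \<in> ?Bad" by blast
      define k where "k = nat \<lceil>\<epsilon> * real n\<rceil>"
      have n1: "n \<ge> 1" using nN by (simp add: N_def)
      have nbig: "real n \<ge> 20/\<epsilon>^2" using nN real_nat_ceiling_ge[of "20/\<epsilon>^2"] unfolding N_def by linarith
      have en: "\<epsilon> * real n > 0" using assms n1 by simp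
      have kge: "real k \<ge> \<epsilon> * real n" unfolding k_def by (rule real_nat_ceiling_ge)
      have "real k > 0" using kge en by linarith
      then have k1: "k \<ge> 1" by simp
      have hB: "\<And>V. V \<in> ?Bad \<Longrightarrow> V \<in> ?S \<and> k \<le> dimZ2 (rad n V)"
      proof -
        fix V assume "V \<in> ?Bad"
        then have "V \<in> ?S" "real (dimZ2 (rad n V)) \<ge> \<epsilon> * real n" by auto
        moreover then have "k \<le> dimZ2 (rad n V)" unfolding k_def by (simp add: nat_le_iff ceiling_le_iff)
        ultimately show "V \<in> ?S \<and> k \<le> dimZ2 (rad n V)" by blast
      qed
      have V0s: "subspZ2 V0" "V0 \<subseteq> ambient n" "dimZ2 V0 = m" using V0 by (auto simp: subspaces_dim_def)
      have "dimZ2 (rad n V0) \<le> dimZ2 V0"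
      proof -
        have Rs: "subspZ2 (rad n V0)" "rad n V0 \<subseteq> ambient n"
          using rad_subspace[OF V0s(1)] rad_sub[of n V0] V0s(2) by auto
        have "card (rad n V0) \<le> card V0"
          using card_subspace(2)[OF V0s(1,2)] rad_sub[of n V0] by (rule card_mono)
        then have "(2::nat)^dimZ2 (rad n V0) \<le> 2^dimZ2 V0"
          using card_subspace(1)[OF Rs] card_subspace(1)[OF V0s(1,2)] by simp
        then show ?thesis by simp
      qed
      then have km: "k \<le> m" using hB[OF V0] V0s(3) by simp
      have m2n: "m \<le> 2*n" using dim_le_2n[OF V0s(1,2)] V0s(3) by simp
      define EG where "EG = k * (k - 1) + (m - k) * (m - 1)"
      define ET where "ET = (\<Sum>i<m. 2*n - min i k)"
      define SM where "SM = (\<Sum>i<m. min i k)"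
      have PG: "(\<Prod>i<m. if i < k then 2^(k-1) else 2^(m-1)) = (2::nat)^EG"
      proof -
        have "(\<Prod>i<m. if i < k then 2^(k-1) else 2^(m-1)) = (\<Prod>i<m. (2::nat)^(if i < k then k-1 else m-1))"
          by (rule prod.cong) auto
        also have "\<dots> = 2^(\<Sum>i<m. if i < k then k-1 else m-1)" by (rule power_sum[symmetric])
        also have "(\<Sum>i<m. if i < k then k-1 else m-1) = EG"
          unfolding EG_def using sum_if_lt[where m=m and k=k and a="k-1" and b="m-1"] km
          by (simp add: min_absorb2)
        finally show ?thesis .
      qed
      have PT: "(\<Prod>i<m. 2^(2*n - min i k)) = (2::nat)^ET" unfolding ET_def by (rule power_sum[symmetric])
      have C1: "card ?Bad * 2^EG \<le> 2^ET" using bad_count[OF km hB] by (simp only: PG PT)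
      have C2: "2^(m*(2*n-1)) \<le> card ?S * 2^(m*m)" using card_S_lower[OF m2n] .
      have C1r: "real (card ?Bad) * 2 powr EG \<le> 2 powr ET"
      proof -
        have "real (card ?Bad * 2^EG) \<le> real ((2::nat)^ET)" using C1 by (simp only: of_nat_le_iff)
        then show ?thesis by (simp add: powr_realpow)
      qed
      have C2r: "2 powr (m*(2*n-1)) \<le> real (card ?S) * 2 powr (m*m)"
      proof -
        have "real ((2::nat)^(m*(2*n-1))) \<le> real (card ?S * 2^(m*m))" using C2 by (simp only: of_nat_le_iff)
        moreover have e1: "(2::real) powr real (m*(2*n-1)) = 2^(m*(2*n-1))" by (rule powr_realpow) simp
        moreover have e2: "(2::real) powr real (m*m) = 2^(m*m)" by (rule powr_realpow) simp
        ultimately show ?thesis by (simp only: e1 e2 of_nat_mult of_nat_power of_nat_numeral)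
      qed
      have Spos: "real (card ?S) > 0"
      proof -
        have "0 < 2 powr (m*(2*n-1))" by simp
        then have "0 < real (card ?S) * 2 powr (m*m)" using C2r by linarith
        then show ?thesis by (simp add: zero_less_mult_iff)
      qed
      define X where "X = real ET - real EG - real (m*(2*n-1)) + real (m*m)"
      have ratio: "real (card ?Bad) / real (card ?S) \<le> 2 powr X"
      proof -
        have b: "real (card ?Bad) \<le> 2 powr (real ET - real EG)"
          using C1r by (simp add: powr_diff divide_simps)
        have s: "2 powr (real (m*(2*n-1)) - real (m*m)) \<le> real (card ?S)"
          using C2r by (simp add: powr_diff divide_simps)
        have "real (card ?Bad) / real (card ?S) \<le> 2 powr (real ET - real EG) / 2 powr (real (m*(2*n-1)) - real (m*m))"
          using b s Spos by (intro frac_le) auto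
        also have "\<dots> = 2 powr X" unfolding X_def by (simp add: powr_diff[symmetric] algebra_simps)
        finally show ?thesis .
      qed
      have ETSM: "ET + SM = 2*n*m"
      proof -
        have "ET + SM = (\<Sum>i<m. (2*n - min i k) + min i k)" unfolding ET_def SM_def by (simp add: sum.distrib)
        also have "\<dots> = (\<Sum>i<m. 2*n)" using m2n by (intro sum.cong) auto
        finally show ?thesis by simp
      qed
      have SM2: "2 * SM = k * (k - 1) + 2 * (m - k) * k" unfolding SM_def by (rule sum_min[OF km])
      have rSM: "real SM = (real k * (real k - 1) + 2 * (real m - real k) * real k) / 2"
        using arg_cong[OF SM2, of real] km k1 by (simp add: of_nat_diff)
      have rET: "real ET = 2 * real n * real m - real SM" using arg_cong[OF ETSM, of real] by simp
      have rEG: "real EG = real k * (real k - 1) + (real m - real k) * (real m - 1)"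
        unfolding EG_def using km k1 by (simp add: of_nat_diff)
      have r2n: "real (m*(2*n-1)) = real m * (2 * real n - 1)" using n1 by (simp add: of_nat_diff)
      have Xeq: "X = 2 * real m - real k * (real k - 1) / 2"
        unfolding X_def rET rSM rEG r2n by (simp add: field_simps)
      have "X \<le> - \<delta> * (real n)^2"
      proof -
        have k2n: "real k \<le> 2 * real n" using km m2n by linarith
        have kk: "real k * real k \<ge> (\<epsilon> * real n) * (\<epsilon> * real n)"
          using kge en by (intro mult_mono) auto
        have "\<epsilon>^2 * real n \<ge> 20" using nbig assms by (simp add: field_simps)
        then have big: "\<epsilon>^2 * real n * real n \<ge> 20 * real n" using n1 by (intro mult_right_mono) auto
        have "X \<le> 4 * real n - (real k * real k - real k) / 2" using Xeq m2n by (simp add: algebra_simps)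
        also have "\<dots> \<le> 5 * real n - \<epsilon>^2 * real n * real n / 2" 
        proof -
          have h: "\<epsilon>^2 * real n * real n \<le> real k * real k" using kk by (simp add: power2_eq_square algebra_simps)
          have aux: "\<And>a b c :: real. a \<le> b \<Longrightarrow> c \<le> 2 * real n \<Longrightarrow> 4 * real n - (b - c) / 2 \<le> 5 * real n - a / 2"
            by (simp add: field_simps)
          show ?thesis using aux[OF h k2n] .
        qed
        also have "\<dots> \<le> - \<delta> * (real n)^2" using big unfolding \<delta>_def by (simp add: power2_eq_square algebra_simps)
        finally show ?thesis .
      qed
      then have "2 powr X \<le> 2 powr (- \<delta> * (real n)^2)" by (intro powr_mono) auto
      then show ?thesis using ratio by linarith
    qed
  qed
qed

end
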